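(* Let $G$ be a group with generating set $S$ not containing the identity. Then every color-permuting automorphism of the Cayley color digraph of $G$ with respect to $S$ is an isometry of $G$ with respect to the cardinal metric $d_C$.
   Context: The cardinal norm is $\|x\| = \min\{|A| : A\subseteq S,\ x\in\langle A\rangle\}$, where $\langle A\rangle$ is the subgroup generated by $A$, and $d_C(g,h)=\|g^{-1}h\|$. The Cayley color digraph has vertex set $G$ and, for each $x\in G$ and $c\in S$, an arc $(x,xc)$ of color $c$. A color-permuting automorphism is a digraph automorphism $\alpha$ (bijection of $G$ with $(x,y)$ an arc iff $(\alpha(x),\alpha(y))$ is an arc) for which there is a permutation $\sigma$ of $S$ such that, for all $x,y\in G$, $(x,y)$ has color $c$ iff $(\alpha(x),\alpha(y))$ has color $\sigma(c)$. *)

theory Defs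
  imports "HOL-Algebra.Algebra"
begin

text \<open>Cardinal norm: least cardinality of a subset A of S with x in the subgroup
generated by A (such A may be taken finite, since every element of a generated
subgroup lies in the subgroup generated by finitely many generators).\<close>
definition cardinal_norm :: "('a, 'b) monoid_scheme \<Rightarrow> 'a set \<Rightarrow> 'a \<Rightarrow> nat" where
  "cardinal_norm G S x = (LEAST n. \<exists>A. A \<subseteq> S \<and> finite A \<and> card A = n \<and> x \<in> generate G A)"

definition cardinal_dist :: "('a, 'b) monoid_scheme \<Rightarrow> 'a set \<Rightarrow> 'a \<Rightarrow> 'a \<Rightarrow> nat" where
  "cardinal_dist G S g h = cardinal_norm G S (inv\<^bsub>G\<^esub> g \<otimes>\<^bsub>G\<^esub> h)"

definition cayley_has_color :: "('a, 'b) monoid_scheme \<Rightarrow> 'a set \<Rightarrow> 'a \<Rightarrow> 'a \<Rightarrow> 'a \<Rightarrow> bool" where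
  "cayley_has_color G S x y c \<longleftrightarrow> x \<in> carrier G \<and> c \<in> S \<and> y = x \<otimes>\<^bsub>G\<^esub> c"

definition cayley_arc :: "('a, 'b) monoid_scheme \<Rightarrow> 'a set \<Rightarrow> 'a \<Rightarrow> 'a \<Rightarrow> bool" where
  "cayley_arc G S x y \<longleftrightarrow> (\<exists>c\<in>S. cayley_has_color G S x y c)"

definition color_permuting_aut :: "('a, 'b) monoid_scheme \<Rightarrow> 'a set \<Rightarrow> ('a \<Rightarrow> 'a) \<Rightarrow> bool" where
  "color_permuting_aut G S \<alpha> \<longleftrightarrow>
     bij_betw \<alpha> (carrier G) (carrier G) \<and>
     (\<forall>x\<in>carrier G. \<forall>y\<in>carrier G. cayley_arc G S x y \<longleftrightarrow> cayley_arc G S (\<alpha> x) (\<alpha> y)) \<and>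
     (\<exists>\<sigma>. bij_betw \<sigma> S S \<and>
        (\<forall>x\<in>carrier G. \<forall>y\<in>carrier G. \<forall>c\<in>S.
           cayley_has_color G S x y c \<longleftrightarrow> cayley_has_color G S (\<alpha> x) (\<alpha> y) (\<sigma> c)))"

end

theory Submission
  imports Defs
begin

lemma (in group) gen_finite:
  assumes "x \<in> generate G S"
  shows "\<exists>A. A \<subseteq> S \<and> finite A \<and> x \<in> generate G A"
  using assms
proof (induction rule: generate.induct)
  case one
  then show ?case by (intro exI[of _ "{}"]) (auto intro: generate.one)
next
  case (incl h)
  then show ?case by (intro exI[of _ "{h}"]) (auto intro: generate.incl)
next
  case (inv h)
  then show ?case by (intro exI[of _ "{h}"]) (auto intro: generate.inv)
next
  case (eng h1 h2)
  then obtain A1 A2 where "A1 \<subseteq> S" "finite A1" "h1 \<in> generate G A1"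
    "A2 \<subseteq> S" "finite A2" "h2 \<in> generate G A2" by blast
  then have "h1 \<in> generate G (A1 \<union> A2)" "h2 \<in> generate G (A1 \<union> A2)"
    using mono_generate[of A1 "A1 \<union> A2"] mono_generate[of A2 "A1 \<union> A2"] by auto
  then show ?case using \<open>A1 \<subseteq> S\<close> \<open>A2 \<subseteq> S\<close> \<open>finite A1\<close> \<open>finite A2\<close>
    by (intro exI[of _ "A1 \<union> A2"]) (auto intro: generate.eng)
qed

lemma (in group) key:
  assumes S: "S \<subseteq> carrier G"
    and bc: "\<And>x. x \<in> carrier G \<Longrightarrow> \<beta> x \<in> carrier G"
    and tS: "\<tau> ` S \<subseteq> S"
    and hom: "\<And>x c. x \<in> carrier G \<Longrightarrow> c \<in> S \<Longrightarrow> \<beta> (x \<otimes> c) = \<beta> x \<otimes> \<tau> c"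
    and A: "A \<subseteq> S"
    and x: "x \<in> generate G A"
  shows "\<forall>g\<in>carrier G. inv (\<beta> g) \<otimes> \<beta> (g \<otimes> x) \<in> generate G (\<tau> ` A)"
  using x
proof (induction rule: generate.induct)
  case one
  then show ?case using bc by (auto intro: generate.one)
next
  case (incl h)
  have "h \<in> carrier G" "\<tau> h \<in> carrier G" using incl A S tS by auto
  moreover have "\<tau> h \<in> generate G (\<tau> ` A)" using incl by (auto intro: generate.incl)
  ultimately show ?case using hom bc incl A
    by (auto simp: m_assoc[symmetric])
next
  case (inv h)
  have hc: "h \<in> carrier G" "\<tau> h \<in> carrier G" using inv A S tS by auto
  have "inv (\<tau> h) \<in> generate G (\<tau> ` A)" using inv by (auto intro: generate.inv)
  moreover have "inv (\<beta> g) \<otimes> \<beta> (g \<otimes> inv h) = inv (\<tau> h)" if g: "g \<in> carrier G" for g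
  proof -
    have "\<beta> g = \<beta> ((g \<otimes> inv h) \<otimes> h)" using g hc by (simp add: m_assoc)
    also have "\<dots> = \<beta> (g \<otimes> inv h) \<otimes> \<tau> h" using hom g hc inv A by auto
    finally have e: "\<beta> g = \<beta> (g \<otimes> inv h) \<otimes> \<tau> h" .
    have c1: "\<beta> (g \<otimes> inv h) \<in> carrier G" using bc g hc by auto
    show ?thesis using e c1 hc g bc
      by (metis inv_mult_group inv_solve_left m_closed inv_closed inv_inv)
  qed
  ultimately show ?case by auto
next
  case (eng h1 h2)
  have c1: "h1 \<in> carrier G" "h2 \<in> carrier G"
    using eng.hyps generate_in_carrier[of A] A S by auto
  show ?case
  proof
    fix g assume g: "g \<in> carrier G"
    have a: "inv (\<beta> g) \<otimes> \<beta> (g \<otimes> h1) \<in> generate G (\<tau> ` A)" using eng.IH g by auto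
    have b: "inv (\<beta> (g \<otimes> h1)) \<otimes> \<beta> ((g \<otimes> h1) \<otimes> h2) \<in> generate G (\<tau> ` A)"
      using eng.IH g c1 by auto
    have "inv (\<beta> g) \<otimes> \<beta> (g \<otimes> (h1 \<otimes> h2)) =
      (inv (\<beta> g) \<otimes> \<beta> (g \<otimes> h1)) \<otimes> (inv (\<beta> (g \<otimes> h1)) \<otimes> \<beta> ((g \<otimes> h1) \<otimes> h2))"
      using g c1 bc by (simp add: m_assoc r_inv_ex inv_closed r_inv[symmetric]
          del: r_inv) (metis bc m_closed m_assoc r_inv l_one inv_closed)
    then show "inv (\<beta> g) \<otimes> \<beta> (g \<otimes> (h1 \<otimes> h2)) \<in> generate G (\<tau> ` A)"
      using a b by (auto intro: generate.eng)
  qed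
qed

lemma (in group) dist_le:
  assumes S: "S \<subseteq> carrier G" and gen: "generate G S = carrier G"
    and bc: "\<And>x. x \<in> carrier G \<Longrightarrow> \<beta> x \<in> carrier G"
    and tS: "\<tau> ` S \<subseteq> S"
    and hom: "\<And>x c. x \<in> carrier G \<Longrightarrow> c \<in> S \<Longrightarrow> \<beta> (x \<otimes> c) = \<beta> x \<otimes> \<tau> c"
    and g: "g \<in> carrier G" and h: "h \<in> carrier G"
  shows "cardinal_dist G S (\<beta> g) (\<beta> h) \<le> cardinal_dist G S g h"
proof -
  let ?x = "inv g \<otimes> h"
  have xc: "?x \<in> carrier G" using g h by auto
  have ex: "\<exists>n A. A \<subseteq> S \<and> finite A \<and> card A = n \<and> ?x \<in> generate G A"
    using gen_finite[of ?x S] xc gen by auto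
  define n where "n = cardinal_norm G S ?x"
  have "\<exists>A. A \<subseteq> S \<and> finite A \<and> card A = n \<and> ?x \<in> generate G A"
    unfolding n_def cardinal_norm_def using LeastI_ex[OF ex] .
  then obtain A where A: "A \<subseteq> S" "finite A" "card A = n" "?x \<in> generate G A" by blast
  have "inv (\<beta> g) \<otimes> \<beta> (g \<otimes> ?x) \<in> generate G (\<tau> ` A)"
    using key[OF S bc tS hom A(1) A(4)] g by auto
  moreover have "g \<otimes> ?x = h" using g h by (simp add: m_assoc[symmetric])
  ultimately have m: "inv (\<beta> g) \<otimes> \<beta> h \<in> generate G (\<tau> ` A)" by simp
  have "cardinal_norm G S (inv (\<beta> g) \<otimes> \<beta> h) \<le> card (\<tau> ` A)"
    unfolding cardinal_norm_def
    by (rule Least_le) (use m A tS in \<open>intro exI[of _ "\<tau> ` A"], auto\<close>)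
  also have "\<dots> \<le> n" using A card_image_le by metis
  finally show ?thesis unfolding cardinal_dist_def n_def .
qed

theorem mainTheorem11:
  fixes G (structure) and S :: "'a set" and \<alpha> :: "'a \<Rightarrow> 'a"
  assumes "group G"
    and "S \<subseteq> carrier G"
    and "generate G S = carrier G"
    and "\<one>\<^bsub>G\<^esub> \<notin> S"
    and "color_permuting_aut G S \<alpha>"
  shows "\<forall>g\<in>carrier G. \<forall>h\<in>carrier G.
           cardinal_dist G S (\<alpha> g) (\<alpha> h) = cardinal_dist G S g h"
proof -
  interpret group G by fact
  have S: "S \<subseteq> carrier G" by fact
  have gen: "generate G S = carrier G" by fact
  from assms(5) obtain \<sigma> where
    bij: "bij_betw \<alpha> (carrier G) (carrier G)" and sb: "bij_betw \<sigma> S S" and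
    col: "\<forall>x\<in>carrier G. \<forall>y\<in>carrier G. \<forall>c\<in>S.
           cayley_has_color G S x y c \<longleftrightarrow> cayley_has_color G S (\<alpha> x) (\<alpha> y) (\<sigma> c)"
    unfolding color_permuting_aut_def by blast
  have ac: "\<And>x. x \<in> carrier G \<Longrightarrow> \<alpha> x \<in> carrier G" using bij bij_betwE by blast
  have sS: "\<sigma> ` S \<subseteq> S" using sb bij_betw_imp_surj_on by blast
  have hom: "\<alpha> (x \<otimes> c) = \<alpha> x \<otimes> \<sigma> c" if "x \<in> carrier G" "c \<in> S" for x c
  proof -
    have "cayley_has_color G S x (x \<otimes> c) c" using that unfolding cayley_has_color_def by auto
    then have "cayley_has_color G S (\<alpha> x) (\<alpha> (x \<otimes> c)) (\<sigma> c)"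
      using col that S by auto
    then show ?thesis unfolding cayley_has_color_def by auto
  qed
  define \<beta> where "\<beta> = inv_into (carrier G) \<alpha>"
  define \<tau> where "\<tau> = inv_into S \<sigma>"
  have bb: "bij_betw \<beta> (carrier G) (carrier G)" unfolding \<beta>_def using bij bij_betw_inv_into by blast
  have bc: "\<And>x. x \<in> carrier G \<Longrightarrow> \<beta> x \<in> carrier G" using bb bij_betwE by blast
  have tb: "bij_betw \<tau> S S" unfolding \<tau>_def using sb bij_betw_inv_into by blast
  have tS: "\<tau> ` S \<subseteq> S" using tb bij_betw_imp_surj_on by blast
  have ainj: "inj_on \<alpha> (carrier G)" using bij bij_betw_def by blast
  have ab: "\<And>y. y \<in> carrier G \<Longrightarrow> \<alpha> (\<beta> y) = y"
    unfolding \<beta>_def using bij by (simp add: bij_betw_inv_into_right)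
  have ba: "\<And>x. x \<in> carrier G \<Longrightarrow> \<beta> (\<alpha> x) = x"
    unfolding \<beta>_def using ainj by (simp add: inv_into_f_f)
  have st: "\<And>c. c \<in> S \<Longrightarrow> \<sigma> (\<tau> c) = c"
    unfolding \<tau>_def using sb by (simp add: bij_betw_inv_into_right)
  have hom2: "\<beta> (y \<otimes> c) = \<beta> y \<otimes> \<tau> c" if y: "y \<in> carrier G" and c: "c \<in> S" for y c
  proof -
    have tc: "\<tau> c \<in> S" using tS c by auto
    have "\<alpha> (\<beta> y \<otimes> \<tau> c) = y \<otimes> c" using hom[OF bc[OF y] tc] ab y st c by simp
    then have "\<beta> (y \<otimes> c) = \<beta> (\<alpha> (\<beta> y \<otimes> \<tau> c))" by simp
    also have "\<dots> = \<beta> y \<otimes> \<tau> c" using ba bc y tc S by auto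
    finally show ?thesis .
  qed
  show ?thesis
  proof (intro ballI antisym)
    fix g h assume g: "g \<in> carrier G" and h: "h \<in> carrier G"
    show "cardinal_dist G S (\<alpha> g) (\<alpha> h) \<le> cardinal_dist G S g h"
      by (rule dist_le[OF S gen ac sS hom g h])
    have "cardinal_dist G S (\<beta> (\<alpha> g)) (\<beta> (\<alpha> h)) \<le> cardinal_dist G S (\<alpha> g) (\<alpha> h)"
      by (rule dist_le[OF S gen bc tS hom2 ac[OF g] ac[OF h]])
    then show "cardinal_dist G S g h \<le> cardinal_dist G S (\<alpha> g) (\<alpha> h)"
      using ba g h by simp
  qed
qed

end
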